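(* Let $V$ be a finite set with $|V|=n$, let $h:2^V\to\mathbb{R}_{\ge0}$ be a non-negative submodular function, and let $a\in\mathbb{R}^V$ with $\max_{i\in V}a_i>0$. Let $f(\delta):=\min_{S\subseteq V}\big(h(S)-\delta a(S)\big)$ and $\delta^*:=\max\{\delta: f(\delta)\ge0\}$ (the largest root of $f$). Run the look-ahead Newton–Dinkelbach method on $f$, initialized as described in the context. Then it returns $\delta^*$, and the number $\ell$ of iterates $\delta^{(1)}>\delta^{(2)}>\dots>\delta^{(\ell)}=\delta^*$ it produces satisfies $\ell\le 2n^2+2n+4$.
   Context: $a(S):=\sum_{i\in S}a_i$, $h_\delta(S):=h(S)-\delta a(S)$. A submodular function minimization oracle returns, for any $\delta$, some $S\in\operatorname{argmin}_{T\subseteq V}h_\delta(T)$; then $f(\delta)=h_\delta(S)$ and $-a(S)$ is a supergradient of $f$ at $\delta$ (an element of $\{g: f(x)\le f(\delta)+g(x-\delta)\ \forall x\}$). Initialization: $\delta^{(1)}:=\min\{h(\{i\})/a_i: i\in V, a_i>0\}$; if $f(\delta^{(1)})=0$ return $\delta^{(1)}$ (so $\ell=1$); otherwise $g^{(1)}:=-a(S^{(1)})$ for the set $S^{(1)}$ returned by the oracle at $\delta^{(1)}$ (then $g^{(1)}<0$). Look-ahead Newton–Dinkelbach method: for $i=1,2,\dots$: if $f(\delta^{(i)})=0$ return $\delta^{(i)}$; else $\delta:=\delta^{(i)}-f(\delta^{(i)})/g^{(i)}$ with supergradient $g$ from the oracle, return NO ROOT if $f(\delta)=-\infty$ or ($f(\delta)<0$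 and $g\ge0$); let $\delta':=2\delta-\delta^{(i)}$ with supergradient $g'$; if $-\infty<f(\delta')<0$ and $g'<0$ replace $(\delta,g)$ by $(\delta',g')$; set $\delta^{(i+1)}:=\delta$, $g^{(i+1)}:=g$. *)

theory Defs
  imports Main "HOL-Library.Infinite_Set" Complex_Main
begin

definition asum :: "('a \<Rightarrow> real) \<Rightarrow> 'a set \<Rightarrow> real" where
  "asum a S = (\<Sum>i\<in>S. a i)"

definition submodular_on :: "'a set \<Rightarrow> ('a set \<Rightarrow> real) \<Rightarrow> bool" where
  "submodular_on V h \<longleftrightarrow>
     (\<forall>S T. S \<subseteq> V \<longrightarrow> T \<subseteq> V \<longrightarrow> h (S \<union> T) + h (S \<inter> T) \<le> h S + h T)"

definition hdelta :: "('a set \<Rightarrow> real) \<Rightarrow> ('a \<Rightarrow> real) \<Rightarrow> real \<Rightarrow> 'a set \<Rightarrow> real" where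
  "hdelta h a d S = h S - d * asum a S"

definition fval :: "'a set \<Rightarrow> ('a set \<Rightarrow> real) \<Rightarrow> ('a \<Rightarrow> real) \<Rightarrow> real \<Rightarrow> real" where
  "fval V h a d = Min (hdelta h a d ` Pow V)"

definition delta_star :: "'a set \<Rightarrow> ('a set \<Rightarrow> real) \<Rightarrow> ('a \<Rightarrow> real) \<Rightarrow> real" where
  "delta_star V h a = (GREATEST d. fval V h a d \<ge> 0)"

definition sfm_oracle :: "'a set \<Rightarrow> ('a set \<Rightarrow> real) \<Rightarrow> ('a \<Rightarrow> real) \<Rightarrow> (real \<Rightarrow> 'a set) \<Rightarrow> bool" where
  "sfm_oracle V h a orc \<longleftrightarrow>
     (\<forall>d. orc d \<subseteq> V \<and> (\<forall>T. T \<subseteq> V \<longrightarrow> hdelta h a d (orc d) \<le> hdelta h a d T))"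

definition sgrad :: "('a \<Rightarrow> real) \<Rightarrow> (real \<Rightarrow> 'a set) \<Rightarrow> real \<Rightarrow> real" where
  "sgrad a orc d = - asum a (orc d)"

text \<open>State of the method: current iterate with its supergradient, returned root, or NO ROOT.\<close>
datatype ln_state = Run real real | Done real | NoRoot

text \<open>One iteration of the look-ahead Newton-Dinkelbach method.  Since f is a minimum over a
  finite nonempty family it is never -infinity, so those tests are vacuous.\<close>
definition ln_step :: "'a set \<Rightarrow> ('a set \<Rightarrow> real) \<Rightarrow> ('a \<Rightarrow> real) \<Rightarrow> (real \<Rightarrow> 'a set)
    \<Rightarrow> ln_state \<Rightarrow> ln_state" where
  "ln_step V h a orc st = (case st of
     Run d g \<Rightarrow>
       (if fval V h a d = 0 then Done d
        else
          let dn = d - fval V h a d / g; gn = sgrad a orc dn in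
          if fval V h a dn < 0 \<and> gn \<ge> 0 then NoRoot
          else
            let dp = 2 * dn - d; gp = sgrad a orc dp in
            if fval V h a dp < 0 \<and> gp < 0 then Run dp gp else Run dn gn)
   | Done d \<Rightarrow> Done d
   | NoRoot \<Rightarrow> NoRoot)"

definition delta_init :: "'a set \<Rightarrow> ('a set \<Rightarrow> real) \<Rightarrow> ('a \<Rightarrow> real) \<Rightarrow> real" where
  "delta_init V h a = Min ((\<lambda>i. h {i} / a i) ` {i \<in> V. a i > 0})"

text \<open>State after k iterations (k = 0: initialised state with delta^(1), g^(1)).
  If f(delta^(1)) = 0 the first step returns delta^(1), matching the initialisation rule.\<close>
definition ln_run :: "'a set \<Rightarrow> ('a set \<Rightarrow> real) \<Rightarrow> ('a \<Rightarrow> real) \<Rightarrow> (real \<Rightarrow> 'a set)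
    \<Rightarrow> nat \<Rightarrow> ln_state" where
  "ln_run V h a orc k =
     (ln_step V h a orc ^^ k) (Run (delta_init V h a) (sgrad a orc (delta_init V h a)))"

fun iterate_of :: "ln_state \<Rightarrow> real" where
  "iterate_of (Run d g) = d"
| "iterate_of (Done d) = d"
| "iterate_of NoRoot = 0"

end

theory Submission
  imports Defs
begin


definition sig :: "'a set set \<Rightarrow> 'a \<Rightarrow> 'a set set" where
  "sig F v = {S \<in> F. v \<in> S}"

definition upc :: "'a set \<Rightarrow> 'a set set \<Rightarrow> 'a set \<Rightarrow> bool" where
  "upc V F R \<longleftrightarrow> R \<subseteq> V \<and> (\<forall>u\<in>R. \<forall>v\<in>V. sig F u \<subseteq> sig F v \<longrightarrow> v \<in> R)
     \<and> (\<forall>v\<in>V. sig F v = F \<longrightarrow> v \<in> R) \<and> (\<forall>u\<in>R. sig F u \<noteq> {})"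

definition Sg :: "'a set \<Rightarrow> 'a set set \<Rightarrow> 'a set set set" where
  "Sg V F = insert F (insert {} (sig F ` V))"

definition Inc :: "'a set \<Rightarrow> 'a set set \<Rightarrow> ('a set set \<times> 'a set set) set" where
  "Inc V F = {(A,B). A \<in> Sg V F \<and> B \<in> Sg V F \<and> \<not> A \<subseteq> B \<and> \<not> B \<subseteq> A}"

definition Phi :: "'a set \<Rightarrow> 'a set set \<Rightarrow> nat" where
  "Phi V F = 2 * card (Sg V F) + card (Inc V F)"

lemma upc_mem: "T \<in> F \<Longrightarrow> T \<subseteq> V \<Longrightarrow> upc V F T"
  unfolding upc_def sig_def by blast

lemma upc_empty: "upc V {} R \<Longrightarrow> V = {}"
  unfolding upc_def sig_def by auto

lemma Sg_sub: "A \<in> Sg V F \<Longrightarrow> A \<subseteq> F"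
  unfolding Sg_def sig_def by auto

lemma fin_Sg: "finite V \<Longrightarrow> finite (Sg V F)"
  unfolding Sg_def by simp

lemma fin_Inc: "finite V \<Longrightarrow> finite (Inc V F)"
proof -
  assume "finite V"
  hence "finite (Sg V F \<times> Sg V F)" using fin_Sg by blast
  moreover have "Inc V F \<subseteq> Sg V F \<times> Sg V F" unfolding Inc_def by auto
  ultimately show ?thesis using finite_subset by blast
qed

lemma Phi_empty: "Phi V {} = 2"
proof -
  have "Sg V {} = {{}}" unfolding Sg_def sig_def by auto
  moreover have "Inc V {} = {}" unfolding Inc_def using \<open>Sg V {} = {{}}\<close> by auto
  ultimately show ?thesis unfolding Phi_def by simp
qed

lemma step:
  assumes fin: "finite V" and TV: "T \<subseteq> V" and nu: "\<not> upc V F T"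
  shows "Phi V F + 2 \<le> Phi V (insert T F)"
proof -
  have TF: "T \<notin> F" using upc_mem TV nu by blast
  define F' where "F' = insert T F"
  define p where "p = (\<lambda>A::'a set set. A - {T})"
  have sigF': "\<And>v. sig F' v = (if v \<in> T then insert T (sig F v) else sig F v)"
    by (auto simp: sig_def F'_def)
  have pis: "\<And>v. p (sig F' v) = sig F v" using TF by (auto simp: p_def sig_def F'_def)
  have piF: "p F' = F" using TF by (auto simp: p_def F'_def)
  have pie: "p {} = {}" by (simp add: p_def)
  have img: "p ` Sg V F' = Sg V F"
  proof -
    have "p ` Sg V F' = insert (p F') (insert (p {}) ((\<lambda>v. p (sig F' v)) ` V))"
      unfolding Sg_def by (simp add: image_image)
    also have "\<dots> = Sg V F" unfolding Sg_def using pis piF pie by simp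
    finally show ?thesis .
  qed
  have finS': "finite (Sg V F')" using fin fin_Sg by blast
  have finS: "finite (Sg V F)" using fin fin_Sg by blast
  have finI': "finite (Inc V F')" using fin fin_Inc by blast
  have mono: "\<And>A B. A \<subseteq> B \<Longrightarrow> p A \<subseteq> p B" by (auto simp: p_def)
  define s where "s = inv_into (Sg V F') p"
  have sS: "\<And>A. A \<in> Sg V F \<Longrightarrow> s A \<in> Sg V F' \<and> p (s A) = A"
    unfolding s_def using img by (metis f_inv_into_f inv_into_into)
  have sub: "(\<lambda>(A,B). (s A, s B)) ` Inc V F \<subseteq> Inc V F'"
  proof
    fix x assume "x \<in> (\<lambda>(A,B). (s A, s B)) ` Inc V F"
    then obtain A B where x: "x = (s A, s B)" and AB: "(A,B) \<in> Inc V F" by auto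
    from AB have A: "A \<in> Sg V F" and B: "B \<in> Sg V F" and nAB: "\<not> A \<subseteq> B" "\<not> B \<subseteq> A"
      unfolding Inc_def by auto
    have "\<not> s A \<subseteq> s B" using mono[of "s A" "s B"] sS[OF A] sS[OF B] nAB by auto
    moreover have "\<not> s B \<subseteq> s A" using mono[of "s B" "s A"] sS[OF A] sS[OF B] nAB by auto
    ultimately show "x \<in> Inc V F'" using x sS[OF A] sS[OF B] unfolding Inc_def by auto
  qed
  have inj: "inj_on (\<lambda>(A,B). (s A, s B)) (Inc V F)"
  proof (rule inj_onI)
    fix x y assume x: "x \<in> Inc V F" and y: "y \<in> Inc V F"
      and e: "(\<lambda>(A,B). (s A, s B)) x = (\<lambda>(A,B). (s A, s B)) y"
    obtain A B where xx: "x = (A,B)" by (cases x)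
    obtain C D where yy: "y = (C,D)" by (cases y)
    have "A \<in> Sg V F" "B \<in> Sg V F" "C \<in> Sg V F" "D \<in> Sg V F"
      using x y xx yy unfolding Inc_def by auto
    then show "x = y" using e xx yy sS by (metis case_prod_conv prod.inject)
  qed
  have cI: "card (Inc V F) \<le> card (Inc V F')"
    using card_inj_on_le[OF inj sub finI'] .
  have cS: "card (Sg V F) \<le> card (Sg V F')" using img card_image_le[OF finS'] by metis
  show ?thesis
  proof (cases "inj_on p (Sg V F')")
    case False
    hence "card (p ` Sg V F') \<noteq> card (Sg V F')" using inj_on_iff_eq_card[OF finS'] by blast
    hence "card (Sg V F) < card (Sg V F')" using img cS by auto
    thus ?thesis unfolding Phi_def F'_def[symmetric] using cI by linarith
  next
    case True
    have SgF': "F' \<in> Sg V F'" "{} \<in> Sg V F'" "\<And>v. v \<in> V \<Longrightarrow> sig F' v \<in> Sg V F'"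
      unfolding Sg_def by auto
    from nu TV have cases: "(\<exists>u\<in>T. \<exists>v\<in>V. sig F u \<subseteq> sig F v \<and> v \<notin> T)
        \<or> (\<exists>v\<in>V. sig F v = F \<and> v \<notin> T) \<or> (\<exists>u\<in>T. sig F u = {})"
      unfolding upc_def by blast
    show ?thesis
    proof -
      have c2: "\<not> (\<exists>v\<in>V. sig F v = F \<and> v \<notin> T)"
      proof
        assume "\<exists>v\<in>V. sig F v = F \<and> v \<notin> T"
        then obtain v where v: "v \<in> V" "sig F v = F" "v \<notin> T" by blast
        have "sig F' v = F" using v sigF' by simp
        moreover have "F \<noteq> F'" using TF F'_def by auto
        moreover have "p (sig F' v) = p F'" using pis piF v by simp
        ultimately show False using True SgF' v unfolding inj_on_def by metis
      qed
      have c3: "\<not> (\<exists>u\<in>T. sig F u = {})"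
      proof
        assume "\<exists>u\<in>T. sig F u = {}"
        then obtain u where u: "u \<in> T" "sig F u = {}" by blast
        have uV: "u \<in> V" using u TV by blast
        have "sig F' u = {T}" using u sigF' by simp
        moreover have "p (sig F' u) = p {}" using pis pie u by simp
        ultimately show False using True SgF' uV unfolding inj_on_def by (metis insert_not_empty)
      qed
      from cases c2 c3 obtain u v where u: "u \<in> T" and v: "v \<in> V" "v \<notin> T"
        and uv: "sig F u \<subseteq> sig F v" by blast
      have uV: "u \<in> V" using u TV by blast
      define A where "A = sig F' u"
      define B where "B = sig F' v"
      have A: "A = insert T (sig F u)" using u sigF' A_def by simp
      have B: "B = sig F v" using v sigF' B_def by simp
      have TB: "T \<notin> B" using B TF unfolding sig_def by auto
      have neq: "sig F u \<noteq> sig F v"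
      proof
        assume eq: "sig F u = sig F v"
        have "p A = p B" using pis A_def B_def eq by simp
        moreover have "A \<noteq> B" using A TB by auto
        ultimately show False using True SgF' uV v A_def B_def unfolding inj_on_def by metis
      qed
      have nAB: "\<not> A \<subseteq> B" using A TB by auto
      have nBA: "\<not> B \<subseteq> A"
      proof
        assume "B \<subseteq> A"
        hence "sig F v \<subseteq> insert T (sig F u)" using A B by simp
        moreover have "T \<notin> sig F v" using TF unfolding sig_def by auto
        ultimately have "sig F v \<subseteq> sig F u" by blast
        thus False using uv neq by blast
      qed
      have ABin: "(A,B) \<in> Inc V F'" "(B,A) \<in> Inc V F'"
        unfolding Inc_def using nAB nBA SgF' uV v A_def B_def by auto
      have ABnot: "(A,B) \<notin> (\<lambda>(A,B). (s A, s B)) ` Inc V F"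
      proof
        assume "(A,B) \<in> (\<lambda>(A,B). (s A, s B)) ` Inc V F"
        then obtain X Y where XY: "(X,Y) \<in> Inc V F" "A = s X" "B = s Y" by auto
        have "X \<in> Sg V F" "Y \<in> Sg V F" using XY unfolding Inc_def by auto
        hence "X = p A" "Y = p B" using sS XY by auto
        hence "X = sig F u" "Y = sig F v" using pis A_def B_def by auto
        thus False using XY uv unfolding Inc_def by auto
      qed
      have BAnot: "(B,A) \<notin> (\<lambda>(A,B). (s A, s B)) ` Inc V F"
      proof
        assume "(B,A) \<in> (\<lambda>(A,B). (s A, s B)) ` Inc V F"
        then obtain X Y where XY: "(X,Y) \<in> Inc V F" "B = s X" "A = s Y" by auto
        have "X \<in> Sg V F" "Y \<in> Sg V F" using XY unfolding Inc_def by auto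
        hence "X = p B" "Y = p A" using sS XY by auto
        hence "X = sig F v" "Y = sig F u" using pis A_def B_def by auto
        thus False using XY uv unfolding Inc_def by auto
      qed
      have AneB: "(A,B) \<noteq> (B,A)" using nAB by auto
      let ?I = "(\<lambda>(A,B). (s A, s B)) ` Inc V F"
      have "insert (A,B) (insert (B,A) ?I) \<subseteq> Inc V F'" using sub ABin by auto
      hence "card (insert (A,B) (insert (B,A) ?I)) \<le> card (Inc V F')"
        using card_mono finI' by blast
      moreover have "card (insert (A,B) (insert (B,A) ?I)) = card ?I + 2"
        using ABnot BAnot AneB fin_Inc[OF fin] by simp
      moreover have "card ?I = card (Inc V F)" using card_image[OF inj] .
      ultimately have "card (Inc V F) + 2 \<le> card (Inc V F')" by simp
      thus ?thesis unfolding Phi_def F'_def[symmetric] using cS by linarith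
    qed
  qed
qed


lemma Phi_bound:
  assumes fin: "finite V"
  shows "Phi V F \<le> card V ^ 2 + card V + 4"
proof -
  define S0 where "S0 = sig F ` V - {F, {}}"
  define m where "m = card S0"
  have finS0: "finite S0" using fin S0_def by simp
  have mn: "m \<le> card V"
  proof -
    have "m \<le> card (sig F ` V)" unfolding m_def S0_def using fin by (simp add: card_mono)
    also have "\<dots> \<le> card V" using card_image_le fin by blast
    finally show ?thesis .
  qed
  have Sgeq: "Sg V F = insert F (insert {} S0)" unfolding Sg_def S0_def by auto
  have cS: "card (Sg V F) \<le> m + 2"
  proof -
    have "card (Sg V F) \<le> Suc (card (insert {} S0))" unfolding Sgeq by (rule card_insert_le_m1) simp_all
    also have "card (insert {} S0) \<le> Suc m" unfolding m_def by (rule card_insert_le_m1) simp_all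
    finally show ?thesis by simp
  qed
  have incsub: "Inc V F \<subseteq> S0 \<times> S0 - (\<lambda>x. (x,x)) ` S0"
  proof
    fix x assume x: "x \<in> Inc V F"
    obtain A B where xx: "x = (A,B)" by (cases x)
    have A: "A \<in> Sg V F" and B: "B \<in> Sg V F" and nAB: "\<not> A \<subseteq> B" "\<not> B \<subseteq> A"
      using x xx unfolding Inc_def by auto
    have "A \<subseteq> F" "B \<subseteq> F" using Sg_sub A B by auto
    hence "A \<noteq> F" "A \<noteq> {}" "B \<noteq> F" "B \<noteq> {}" "A \<noteq> B" using nAB by auto
    thus "x \<in> S0 \<times> S0 - (\<lambda>x. (x,x)) ` S0" using A B xx unfolding Sgeq by auto
  qed
  have "card (S0 \<times> S0 - (\<lambda>x. (x,x)) ` S0) = m * m - m"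
  proof -
    have "card (S0 \<times> S0 - (\<lambda>x. (x,x)) ` S0) = card (S0 \<times> S0) - card ((\<lambda>x. (x,x)) ` S0)"
      by (rule card_Diff_subset) (auto simp: finS0)
    moreover have "card ((\<lambda>x. (x,x)) ` S0) = m" unfolding m_def
      by (rule card_image) (auto simp: inj_on_def)
    ultimately show ?thesis by (simp add: card_cartesian_product m_def)
  qed
  hence cI: "card (Inc V F) \<le> m * m - m"
    using card_mono[OF _ incsub] finS0 by (metis finite_Diff finite_SigmaI)
  have "Phi V F \<le> 2 * (m + 2) + (m * m - m)" unfolding Phi_def using add_mono[OF mult_le_mono2[OF cS, of 2] cI] .
  also have "\<dots> = m * m + m + 4" by (simp add: algebra_simps)
  also have "\<dots> \<le> card V * card V + card V + 4" using mn by (simp add: add_mono mult_le_mono)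
  finally show ?thesis by (simp add: power2_eq_square)
qed

lemma upc_bound:
  assumes TV: "T \<subseteq> V"
    and nn: "\<And>S. S \<subseteq> V \<Longrightarrow> g S \<ge> (0::real)"
    and sm: "\<And>S U. S \<subseteq> V \<Longrightarrow> U \<subseteq> V \<Longrightarrow> g (S \<union> U) + g (S \<inter> U) \<le> g S + g U"
    and M0: "0 \<le> M" and MB: "\<And>X. upc V F X \<Longrightarrow> g X \<le> M"
    and R: "upc V (insert T F) R"
  shows "g R \<le> g T + 2 * M"
proof -
  define F' where "F' = insert T F"
  have sigF': "\<And>v. sig F' v = (if v \<in> T then insert T (sig F v) else sig F v)"
    by (auto simp: sig_def F'_def)
  have R': "R \<subseteq> V" "\<And>u v. u \<in> R \<Longrightarrow> v \<in> V \<Longrightarrow> sig F' u \<subseteq> sig F' v \<Longrightarrow> v \<in> R"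
     "\<And>v. v \<in> V \<Longrightarrow> sig F' v = F' \<Longrightarrow> v \<in> R" "\<And>u. u \<in> R \<Longrightarrow> sig F' u \<noteq> {}"
    using R unfolding upc_def F'_def by blast+
  define Y where "Y = {v\<in>V. \<exists>u\<in>R - T. sig F u \<subseteq> sig F v}"
  define X where "X = {v\<in>V. (\<exists>u\<in>R. sig F u \<subseteq> sig F v) \<or> sig F v = F}"
  have XV: "X \<subseteq> V" and YV: "Y \<subseteq> V" unfolding X_def Y_def by auto
  have sigsub: "\<And>v. sig F v \<subseteq> F" unfolding sig_def by auto
  have Req: "R = (T \<inter> X) \<union> Y"
  proof
    show "R \<subseteq> (T \<inter> X) \<union> Y" unfolding X_def Y_def using R'(1) by auto
  next
    show "(T \<inter> X) \<union> Y \<subseteq> R"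
    proof
      fix v assume v: "v \<in> (T \<inter> X) \<union> Y"
      show "v \<in> R"
      proof (cases "v \<in> Y")
        case True
        then obtain u where u: "u \<in> R" "u \<notin> T" "sig F u \<subseteq> sig F v" and vV: "v \<in> V"
          unfolding Y_def by auto
        have "sig F' u \<subseteq> sig F' v" using u sigF' by auto
        thus ?thesis using R'(2) u vV by blast
      next
        case False
        hence vT: "v \<in> T" and vX: "v \<in> X" using v by auto
        have vV: "v \<in> V" using vX X_def by auto
        from vX consider (a) u where "u \<in> R" "sig F u \<subseteq> sig F v" | (b) "sig F v = F"
          unfolding X_def by auto
        then show ?thesis
        proof cases
          case a
          have "sig F' u \<subseteq> sig F' v" using a vT sigF' by auto
          thus ?thesis using R'(2) a vV by blast
        next
          case b
          have "sig F' v = F'" using b vT sigF' F'_def by simp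
          thus ?thesis using R'(3) vV by blast
        qed
      qed
    qed
  qed
  have gY: "g Y \<le> M \<or> Y = {}"
  proof (cases "Y = {}")
    case False
    then obtain w where "w \<in> Y" by auto
    then obtain u0 where u0: "u0 \<in> R" "u0 \<notin> T" unfolding Y_def by auto
    have "upc V F Y" unfolding upc_def
    proof (intro conjI ballI impI)
      show "Y \<subseteq> V" by (rule YV)
    next
      fix u v assume "u \<in> Y" "v \<in> V" "sig F u \<subseteq> sig F v"
      thus "v \<in> Y" unfolding Y_def by (auto intro: order_trans)
    next
      fix v assume "v \<in> V" "sig F v = F"
      thus "v \<in> Y" unfolding Y_def using u0 sigsub by auto
    next
      fix w assume "w \<in> Y"
      then obtain u where u: "u \<in> R" "u \<notin> T" "sig F u \<subseteq> sig F w" unfolding Y_def by auto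
      have "sig F' u \<noteq> {}" using R'(4) u by blast
      hence "sig F u \<noteq> {}" using sigF' u by simp
      thus "sig F w \<noteq> {}" using u by auto
    qed
    thus ?thesis using MB by blast
  qed simp
  have gX: "g (T \<inter> X) \<le> g T + M"
  proof (cases "\<exists>w\<in>X. sig F w = {}")
    case True
    then obtain w where w: "w \<in> X" "sig F w = {}" by blast
    have "X = V"
    proof
      show "V \<subseteq> X"
      proof
        fix v assume vV: "v \<in> V"
        from w consider (a) u where "u \<in> R" "sig F u \<subseteq> sig F w" | (b) "sig F w = F"
          unfolding X_def by auto
        then show "v \<in> X"
        proof cases
          case a thus ?thesis using w vV unfolding X_def by auto
        next
          case b hence "F = {}" using w by simp
          hence "sig F v = F" unfolding sig_def by simp
          thus ?thesis using vV unfolding X_def by auto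
        qed
      qed
    qed (rule XV)
    hence "T \<inter> X = T" using TV by auto
    thus ?thesis using M0 by simp
  next
    case False
    have "upc V F X" unfolding upc_def
    proof (intro conjI ballI impI)
      show "X \<subseteq> V" by (rule XV)
    next
      fix u v assume u: "u \<in> X" and v: "v \<in> V" and uv: "sig F u \<subseteq> sig F v"
      from u consider (a) w where "w \<in> R" "sig F w \<subseteq> sig F u" | (b) "sig F u = F"
        unfolding X_def by auto
      then show "v \<in> X"
      proof cases
        case a
        have "sig F w \<subseteq> sig F v" using a uv by blast
        thus ?thesis using v a unfolding X_def by blast
      next
        case b hence "sig F v = F" using uv sigsub by (metis subset_antisym)
        thus ?thesis using v unfolding X_def by auto
      qed
    next
      fix v assume "v \<in> V" "sig F v = F"
      thus "v \<in> X" unfolding X_def by auto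
    next
      fix w assume "w \<in> X" thus "sig F w \<noteq> {}" using False by auto
    qed
    hence "g X \<le> M" using MB by blast
    moreover have "g (T \<union> X) + g (T \<inter> X) \<le> g T + g X" using sm TV XV by blast
    moreover have "g (T \<union> X) \<ge> 0" using nn TV XV by blast
    ultimately show ?thesis by linarith
  qed
  show ?thesis
  proof (cases "Y = {}")
    case True
    thus ?thesis using Req gX M0 by simp
  next
    case False
    hence gY': "g Y \<le> M" using gY by blast
    have TXV: "T \<inter> X \<subseteq> V" using TV by auto
    have "g ((T \<inter> X) \<union> Y) + g ((T \<inter> X) \<inter> Y) \<le> g (T \<inter> X) + g Y" using sm TXV YV by blast
    moreover have "g ((T \<inter> X) \<inter> Y) \<ge> 0" using nn TXV by blast
    ultimately show ?thesis using Req gX gY' by (simp only: Req)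
  qed
qed


lemma chain_bound:
  assumes fin: "finite V" and Vne: "V \<noteq> {}"
    and nn: "\<And>S. S \<subseteq> V \<Longrightarrow> g S \<ge> (0::real)"
    and sm: "\<And>S U. S \<subseteq> V \<Longrightarrow> U \<subseteq> V \<Longrightarrow> g (S \<union> U) + g (S \<inter> U) \<le> g S + g U"
    and TV: "\<And>j. j < q \<Longrightarrow> T j \<subseteq> V"
    and dec: "\<And>j. Suc j < q \<Longrightarrow> g (T j) > 0 \<and> 4 * g (T (Suc j)) \<le> g (T j)"
  shows "2 * q \<le> card V ^ 2 + card V + 2"
proof -
  define Fm where "Fm i = T ` {i..<q}" for i
  have Fq: "Fm q = {}" unfolding Fm_def by simp
  have Fi: "Fm i = insert (T i) (Fm (Suc i))" if "i < q" for i
  proof -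
    have "{i..<q} = insert i {Suc i..<q}" using that by auto
    thus ?thesis unfolding Fm_def by simp
  qed
  define bd where "bd i = (if i < q then 2 * g (T i) else 0)" for i
  have bd0: "bd i \<ge> 0" for i unfolding bd_def using nn TV by auto
  have B: "\<forall>X. upc V (Fm (q - k)) X \<longrightarrow> g X \<le> bd (q - k)" if "k \<le> q" for k
    using that
  proof (induction k)
    case 0
    show ?case using upc_empty Vne Fq by auto
  next
    case (Suc k)
    define i where "i = q - Suc k"
    have iq: "i < q" and si: "Suc i = q - k" using Suc.prems i_def by auto
    have IH: "\<And>X. upc V (Fm (Suc i)) X \<Longrightarrow> g X \<le> bd (Suc i)" using Suc si by auto
    show ?case unfolding i_def[symmetric]
    proof (intro allI impI)
      fix X assume X: "upc V (Fm i) X"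
      have "g X \<le> g (T i) + 2 * bd (Suc i)"
        by (rule upc_bound[OF TV[OF iq] nn sm bd0 IH]) (use X Fi[OF iq] in auto)
      also have "\<dots> \<le> bd i"
      proof (cases "Suc i < q")
        case True thus ?thesis using dec[OF True] iq unfolding bd_def by auto
      next
        case False thus ?thesis using iq nn[OF TV[OF iq]] unfolding bd_def by auto
      qed
      finally show "g X \<le> bd i" .
    qed
  qed
  have NU: "\<not> upc V (Fm (Suc i)) (T i)" if "i < q" for i
  proof
    assume U: "upc V (Fm (Suc i)) (T i)"
    have "g (T i) \<le> bd (Suc i)" using B[of "q - Suc i"] that U by auto
    show False
    proof (cases "Suc i < q")
      case True
      thus False using \<open>g (T i) \<le> bd (Suc i)\<close> dec[OF True] unfolding bd_def by auto
    next
      case False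
      hence "Fm (Suc i) = {}" using that Fq by (metis Suc_lessI)
      thus False using U upc_empty Vne by metis
    qed
  qed
  have P: "2 + 2 * k \<le> Phi V (Fm (q - k))" if "k \<le> q" for k
    using that
  proof (induction k)
    case 0 thus ?case by (simp add: Fq Phi_empty)
  next
    case (Suc k)
    define i where "i = q - Suc k"
    have iq: "i < q" and si: "Suc i = q - k" using Suc.prems i_def by auto
    have "Phi V (Fm (Suc i)) + 2 \<le> Phi V (insert (T i) (Fm (Suc i)))"
      by (rule step[OF fin TV[OF iq] NU[OF iq]])
    thus ?case using Suc si Fi[OF iq] i_def by auto
  qed
  have "2 + 2 * q \<le> Phi V (Fm 0)" using P[of q] by simp
  also have "\<dots> \<le> card V ^ 2 + card V + 4" by (rule Phi_bound[OF fin])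
  finally show ?thesis by simp
qed



locale ND =
  fixes V :: "'a set" and h :: "'a set \<Rightarrow> real" and a :: "'a \<Rightarrow> real"
    and orc :: "real \<Rightarrow> 'a set"
  assumes fin: "finite V"
    and hnn: "\<forall>S. S \<subseteq> V \<longrightarrow> h S \<ge> 0"
    and sub: "submodular_on V h"
    and pos: "\<exists>i\<in>V. a i > 0"
    and orc: "sfm_oracle V h a orc"
begin

lemma orc_sub: "orc d \<subseteq> V" using orc unfolding sfm_oracle_def by blast

lemma orc_min: "T \<subseteq> V \<Longrightarrow> hdelta h a d (orc d) \<le> hdelta h a d T"
  using orc unfolding sfm_oracle_def by blast

lemma fval_eq: "fval V h a d = hdelta h a d (orc d)"
  unfolding fval_def
  by (rule Min_eqI) (use fin orc_min orc_sub in auto)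

lemma fval_le: "T \<subseteq> V \<Longrightarrow> fval V h a d \<le> hdelta h a d T"
  using fval_eq orc_min by simp

definition Rset where "Rset = (\<lambda>S. h S / asum a S) ` {S. S \<subseteq> V \<and> asum a S > 0}"
definition Dm where "Dm = Min Rset"

lemma Rset_fin: "finite Rset" unfolding Rset_def using fin by simp

lemma Rset_ne: "Rset \<noteq> {}"
proof -
  obtain i where "i \<in> V" "a i > 0" using pos by blast
  hence "{i} \<in> {S. S \<subseteq> V \<and> asum a S > 0}" by (simp add: asum_def)
  thus ?thesis unfolding Rset_def by blast
qed

lemma Dm_le: "S \<subseteq> V \<Longrightarrow> asum a S > 0 \<Longrightarrow> Dm \<le> h S / asum a S"
  unfolding Dm_def by (rule Min_le[OF Rset_fin]) (auto simp: Rset_def)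

lemma Dm_att: "\<exists>S. S \<subseteq> V \<and> asum a S > 0 \<and> Dm = h S / asum a S"
proof -
  have "Dm \<in> Rset" unfolding Dm_def using Min_in[OF Rset_fin Rset_ne] .
  thus ?thesis unfolding Rset_def by auto
qed

lemma Dm_nn: "0 \<le> Dm"
  using Dm_att hnn by (metis divide_nonneg_pos)

lemma gam_nn: "S \<subseteq> V \<Longrightarrow> 0 \<le> h S - Dm * asum a S"
proof -
  assume S: "S \<subseteq> V"
  show ?thesis
  proof (cases "asum a S > 0")
    case True
    have "Dm \<le> h S / asum a S" using Dm_le S True by blast
    hence "Dm * asum a S \<le> h S" using True by (simp add: pos_le_divide_eq)
    thus ?thesis by simp
  next
    case False
    hence "Dm * asum a S \<le> 0" using Dm_nn by (simp add: mult_nonneg_nonpos)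
    thus ?thesis using hnn S by smt
  qed
qed

lemma fD: "fval V h a Dm = 0"
proof -
  obtain S where S: "S \<subseteq> V" "asum a S > 0" "Dm = h S / asum a S" using Dm_att by blast
  have "hdelta h a Dm S = 0" using S unfolding hdelta_def by simp
  hence "fval V h a Dm \<le> 0" using fval_le S by smt
  moreover have "fval V h a Dm \<ge> 0" using fval_eq gam_nn orc_sub unfolding hdelta_def by simp
  ultimately show ?thesis by simp
qed

lemma fneg: "d > Dm \<Longrightarrow> fval V h a d < 0"
proof -
  assume d: "d > Dm"
  obtain S where S: "S \<subseteq> V" "asum a S > 0" "Dm = h S / asum a S" using Dm_att by blast
  have "h S = Dm * asum a S" using S by simp
  hence "hdelta h a d S = (Dm - d) * asum a S" unfolding hdelta_def by (simp add: algebra_simps)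
  moreover have "(Dm - d) * asum a S < 0" using d S(2) by (simp add: mult_neg_pos)
  ultimately have "hdelta h a d S < 0" by simp
  thus ?thesis using fval_le S by smt
qed

lemma dstar: "delta_star V h a = Dm"
  unfolding delta_star_def
proof (rule Greatest_equality)
  show "0 \<le> fval V h a Dm" using fD by simp
  fix y assume "0 \<le> fval V h a y"
  thus "y \<le> Dm" using fneg[of y] by (meson leD le_less_linear)
qed

definition A where "A x = asum a (orc x)"
definition G where "G x = h (orc x) - Dm * A x"

lemma G_nn: "0 \<le> G x" unfolding G_def A_def using gam_nn orc_sub by blast

lemma fval_G: "fval V h a x = G x - (x - Dm) * A x"
  unfolding fval_eq hdelta_def G_def A_def by (simp add: algebra_simps)

lemma G_D: "G Dm = 0" using fval_G fD by simp

lemma Apos: "x > Dm \<Longrightarrow> A x > 0"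
proof -
  assume x: "x > Dm"
  have "fval V h a x < 0" using fneg x by blast
  hence "h (orc x) - x * A x < 0" unfolding fval_eq hdelta_def A_def .
  moreover have "h (orc x) \<ge> 0" using hnn orc_sub by blast
  ultimately have "x * A x > 0" by linarith
  moreover have "x > 0" using x Dm_nn by linarith
  ultimately show ?thesis by (simp add: zero_less_mult_iff)
qed

lemma sgrad_A: "sgrad a orc x = - A x" unfolding sgrad_def A_def by simp


definition nxt where
  "nxt x = (let dn = h (orc x) / A x; dp = 2 * dn - x in
     if fval V h a dp < 0 \<and> sgrad a orc dp < 0 then dp else dn)"

lemma dn_eq: "x > Dm \<Longrightarrow> h (orc x) / A x = Dm + G x / A x"
  using Apos[of x] unfolding G_def by (simp add: field_simps)

lemma dn_ge: "x > Dm \<Longrightarrow> Dm \<le> h (orc x) / A x"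
  using Dm_le[OF orc_sub] Apos[of x] unfolding A_def by blast

lemma neg_gt: "fval V h a y < 0 \<Longrightarrow> Dm \<le> y \<Longrightarrow> Dm < y"
  using fD by (cases "y = Dm") auto

lemma step_run:
  assumes x: "x > Dm"
  shows "ln_step V h a orc (Run x (sgrad a orc x)) = Run (nxt x) (sgrad a orc (nxt x))"
proof -
  have Ax: "A x > 0" using Apos x by blast
  have f0: "fval V h a x \<noteq> 0" using fneg x by force
  have fx: "fval V h a x = h (orc x) - x * A x" unfolding fval_eq hdelta_def A_def ..
  have dn: "x - fval V h a x / sgrad a orc x = h (orc x) / A x"
    unfolding fx sgrad_A using Ax by (simp add: field_simps)
  have nr: "\<not> (fval V h a (h (orc x) / A x) < 0 \<and> sgrad a orc (h (orc x) / A x) \<ge> 0)"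
  proof
    assume c: "fval V h a (h (orc x) / A x) < 0 \<and> sgrad a orc (h (orc x) / A x) \<ge> 0"
    hence "Dm < h (orc x) / A x" using neg_gt dn_ge x by blast
    hence "A (h (orc x) / A x) > 0" using Apos by blast
    thus False using c sgrad_A by simp
  qed
  show ?thesis unfolding ln_step_def nxt_def Let_def using f0 dn nr by simp
qed

lemma step_done: "ln_step V h a orc (Run Dm g) = Done Dm"
  unfolding ln_step_def using fD by simp

lemma nxt_props:
  assumes x: "x > Dm"
  shows "Dm \<le> nxt x \<and> nxt x < x \<and> nxt x \<le> Dm + G x / A x \<and>
    ((nxt x = Dm + G x / A x \<and> 2 * (G x / A x) \<le> x - Dm) \<or>
     (nxt x = 2 * (Dm + G x / A x) - x \<and> nxt x > Dm))"
proof -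
  have Ax: "A x > 0" using Apos x by blast
  define u where "u = G x / A x"
  have u0: "0 \<le> u" unfolding u_def using G_nn Ax by simp
  have "G x - (x - Dm) * A x < 0" using fneg[OF x] fval_G by simp
  hence "G x < (x - Dm) * A x" by simp
  hence ut: "u < x - Dm" unfolding u_def using Ax by (simp add: divide_less_eq)
  define dp where "dp = 2 * (Dm + u) - x"
  have nx: "nxt x = (if fval V h a dp < 0 \<and> sgrad a orc dp < 0 then dp else Dm + u)"
    unfolding nxt_def Let_def dn_eq[OF x] u_def dp_def ..
  show ?thesis
  proof (cases "fval V h a dp < 0 \<and> sgrad a orc dp < 0")
    case True
    hence Adp: "A dp > 0" using sgrad_A by simp
    have "h (orc dp) - dp * A dp < 0" using True unfolding fval_eq hdelta_def A_def by simp
    hence "h (orc dp) / A dp < dp" using Adp by (simp add: divide_less_eq)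
    moreover have "Dm \<le> h (orc dp) / A dp" using Dm_le[OF orc_sub] Adp unfolding A_def by blast
    ultimately have "Dm < dp" by simp
    thus ?thesis using nx True ut u0 unfolding u_def[symmetric] dp_def by auto
  next
    case False
    have "dp \<le> Dm"
    proof (rule ccontr)
      assume "\<not> dp \<le> Dm"
      hence "Dm < dp" by simp
      hence "fval V h a dp < 0 \<and> sgrad a orc dp < 0" using fneg Apos sgrad_A by simp
      thus False using False by blast
    qed
    thus ?thesis using nx False ut u0 unfolding u_def[symmetric] dp_def by auto
  qed
qed

lemma monoAG:
  assumes y: "Dm \<le> y" and yx: "y < x"
  shows "A y \<le> A x \<and> G y \<le> G x"
proof -
  have h1: "h (orc x) - x * A x \<le> h (orc y) - x * A y"
    using orc_min[OF orc_sub, of x y] unfolding hdelta_def A_def .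
  have h2: "h (orc y) - y * A y \<le> h (orc x) - y * A x"
    using orc_min[OF orc_sub, of y x] unfolding hdelta_def A_def .
  have "(x - y) * (A y - A x) = (x * A y - x * A x) - (y * A y - y * A x)" by (simp add: algebra_simps)
  hence "(x - y) * (A y - A x) \<le> 0" using h1 h2 by linarith
  hence AA: "A y \<le> A x" using yx by (simp add: mult_le_0_iff)
  have "G y - G x = (h (orc y) - h (orc x)) - Dm * (A y - A x)" unfolding G_def by (simp add: algebra_simps)
  also have "\<dots> \<le> y * (A y - A x) - Dm * (A y - A x)" using h2 by (simp add: algebra_simps)
  also have "\<dots> = (y - Dm) * (A y - A x)" by (simp add: algebra_simps)
  also have "\<dots> \<le> 0" using y AA by (simp add: mult_nonneg_nonpos)
  finally show ?thesis using AA by simp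
qed

lemma caseA:
  assumes x: "x > Dm" and yd: "nxt x = 2 * (Dm + G x / A x) - x" and yp: "nxt x > Dm"
  shows "G (nxt x) \<le> G x / 2"
proof -
  define y where "y = nxt x"
  define \<alpha> where "\<alpha> = A x"
  define \<beta> where "\<beta> = A y"
  define t where "t = x - Dm"
  define u where "u = G x / \<alpha>"
  have al: "\<alpha> > 0" using Apos x \<alpha>_def by blast
  have be: "\<beta> > 0" using Apos yp y_def \<beta>_def by blast
  have s: "y - Dm = 2 * u - t" using yd unfolding y_def u_def \<alpha>_def t_def by simp
  have opt: "h (orc x) - x * \<alpha> \<le> h (orc y) - x * \<beta>"
    using orc_min[OF orc_sub, of x y] unfolding hdelta_def A_def \<alpha>_def \<beta>_def .
  hence opt': "G x - t * \<alpha> \<le> G y - t * \<beta>"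
    unfolding G_def t_def \<alpha>_def[symmetric] \<beta>_def[symmetric] by (simp add: algebra_simps)
  have fy: "G y - (2 * u - t) * \<beta> < 0" using fneg[of y] yp fval_G[of y] s y_def \<beta>_def by simp
  have fx: "G x - t * \<alpha> < 0" using fneg[OF x] fval_G[of x] t_def \<alpha>_def by simp
  define w where "w = G x - t * \<alpha>"
  have uw: "(u - t) * \<alpha> = w" unfolding u_def w_def using al by (simp add: field_simps)
  have w1: "w < 2 * (u - t) * \<beta>" using opt' fy unfolding w_def by (simp add: algebra_simps)
  have "w * \<alpha> < 2 * (u - t) * \<beta> * \<alpha>" using w1 al by simp
  also have "\<dots> = 2 * \<beta> * ((u - t) * \<alpha>)" by (simp add: algebra_simps)
  also have "\<dots> = 2 * w * \<beta>" using uw by simp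
  finally have "w * (\<alpha> - 2 * \<beta>) < 0" by (simp add: algebra_simps)
  hence ab: "2 * \<beta> < \<alpha>" using fx unfolding w_def[symmetric] by (simp add: mult_less_0_iff)
  have "(u - t) * \<alpha> < 0" using uw fx unfolding w_def[symmetric] by simp
  hence ut: "u < t" using al by (simp add: mult_less_0_iff)
  have "G y < (2 * u - t) * \<beta>" using fy by simp
  also have "\<dots> \<le> u * \<beta>" using ut be by (simp add: mult_right_mono)
  also have "\<dots> = G x * \<beta> / \<alpha>" unfolding u_def by simp
  also have "\<dots> \<le> G x / 2"
  proof -
    have "G x * (2 * \<beta>) \<le> G x * \<alpha>" using ab G_nn by (simp add: mult_left_mono)
    thus ?thesis using al by (simp add: divide_le_eq field_simps)
  qed
  finally show ?thesis unfolding y_def by simp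
qed

lemma caseB:
  assumes x: "x > Dm" and yp: "nxt x > Dm" and c: "2 * (G (nxt x) / A (nxt x)) \<le> nxt x - Dm"
  shows "G (nxt x) \<le> G x / 2"
proof -
  define y where "y = nxt x"
  have Ax: "A x > 0" using Apos x by blast
  have Ay: "A y > 0" using Apos yp y_def by blast
  have P: "Dm \<le> y \<and> y < x \<and> y \<le> Dm + G x / A x" using nxt_props[OF x] y_def by blast
  have AA: "A y \<le> A x" using monoAG P by blast
  have "2 * (G y / A y) \<le> G x / A x" using c P y_def by simp
  hence "2 * G y * A x \<le> G x * A y" using Ax Ay by (simp add: field_simps)
  also have "\<dots> \<le> G x * A x" using AA G_nn by (simp add: mult_left_mono)
  finally have "2 * G y \<le> G x" using Ax by simp
  thus ?thesis unfolding y_def by simp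
qed

lemma half:
  assumes x: "x > Dm" and y: "nxt x > Dm"
  shows "G (nxt (nxt x)) \<le> G x / 2"
proof -
  have Px: "Dm \<le> nxt x \<and> nxt x < x" using nxt_props[OF x] by blast
  have Py: "Dm \<le> nxt (nxt x) \<and> nxt (nxt x) < nxt x" using nxt_props[OF y] by blast
  have Gxy: "G (nxt x) \<le> G x" using monoAG Px by blast
  have Gyz: "G (nxt (nxt x)) \<le> G (nxt x)" using monoAG Py by blast
  from nxt_props[OF y] consider
    (B) "2 * (G (nxt x) / A (nxt x)) \<le> nxt x - Dm"
  | (A) "nxt (nxt x) = 2 * (Dm + G (nxt x) / A (nxt x)) - nxt x" "nxt (nxt x) > Dm" by blast
  then show ?thesis
  proof cases
    case B thus ?thesis using caseB[OF x y] Gyz by simp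
  next
    case A thus ?thesis using caseA[OF y] Gxy by fastforce
  qed
qed

lemma gpos:
  assumes x: "x > Dm" and y: "nxt x > Dm"
  shows "G x > 0"
proof (rule ccontr)
  assume "\<not> G x > 0"
  hence "G x = 0" using G_nn by (metis less_eq_real_def)
  thus False using nxt_props[OF x] y by simp
qed


definition gm where "gm S = h S - Dm * asum a S"

lemma gm_sub: "S \<subseteq> V \<Longrightarrow> U \<subseteq> V \<Longrightarrow> gm (S \<union> U) + gm (S \<inter> U) \<le> gm S + gm U"
proof -
  assume S: "S \<subseteq> V" and U: "U \<subseteq> V"
  have fS: "finite S" "finite U" using S U fin finite_subset by auto
  have "asum a (S \<union> U) + asum a (S \<inter> U) = asum a S + asum a U"
    unfolding asum_def using sum.union_inter[OF fS] .
  moreover have "h (S \<union> U) + h (S \<inter> U) \<le> h S + h U" using sub S U unfolding submodular_on_def by blast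
  moreover have "Dm * asum a (S \<union> U) + Dm * asum a (S \<inter> U) = Dm * asum a S + Dm * asum a U"
    using calculation(1) by (metis distrib_left)
  ultimately show ?thesis unfolding gm_def by linarith
qed

lemma G_gm: "G x = gm (orc x)" unfolding G_def gm_def A_def ..

lemma count:
  assumes L: "1 \<le> L" and ge: "\<And>k. k < L \<Longrightarrow> Dm \<le> d k"
    and nf: "\<And>k. Suc k < L \<Longrightarrow> Dm < d k \<and> d (Suc k) = nxt (d k)"
  shows "L \<le> 2 * card V ^ 2 + 2 * card V + 4"
proof -
  have h2: "G (d (k + 2)) \<le> G (d k) / 2" if "k + 2 < L" for k
  proof -
    have a1: "Dm < d k" "d (Suc k) = nxt (d k)" using nf[of k] that by auto
    have a2: "Dm < d (Suc k)" "d (Suc (Suc k)) = nxt (d (Suc k))" using nf[of "Suc k"] that by auto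
    have "G (nxt (nxt (d k))) \<le> G (d k) / 2" using half a1 a2 by simp
    thus ?thesis using a1 a2 by (simp add: numeral_2_eq_2)
  qed
  have h4: "4 * G (d (k + 4)) \<le> G (d k)" if "k + 4 < L" for k
  proof -
    have e: "k + 2 + 2 = k + 4" by simp
    have "G (d (k + 4)) \<le> G (d (k + 2)) / 2" using h2[of "k+2", unfolded e] that by simp
    moreover have "G (d (k + 2)) \<le> G (d k) / 2" using h2[of k] that by simp
    ultimately show ?thesis by linarith
  qed
  have gp: "G (d k) > 0" if "k + 2 < L" for k
  proof -
    have a1: "Dm < d k" "d (Suc k) = nxt (d k)" using nf[of k] that by auto
    have a2: "Dm < d (Suc k)" using nf[of "Suc k"] that by auto
    show ?thesis using gpos a1 a2 by simp
  qed
  define r where "r = (L - 1) mod 4"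
  define q where "q = (L - 1) div 4 + 1"
  define T where "T j = orc (d (r + 4 * j))" for j
  have Vne: "V \<noteq> {}" using pos by blast
  have "2 * q \<le> card V ^ 2 + card V + 2"
  proof (rule chain_bound[OF fin Vne])
    show "\<And>S. S \<subseteq> V \<Longrightarrow> 0 \<le> gm S" unfolding gm_def using gam_nn by blast
    show "\<And>S U. S \<subseteq> V \<Longrightarrow> U \<subseteq> V \<Longrightarrow> gm (S \<union> U) + gm (S \<inter> U) \<le> gm S + gm U"
      by (rule gm_sub)
    show "\<And>j. j < q \<Longrightarrow> T j \<subseteq> V" unfolding T_def using orc_sub by blast
    fix j assume j: "Suc j < q"
    have Lr: "L - 1 = 4 * ((L - 1) div 4) + r" unfolding r_def by simp
    have jj: "r + 4 * j + 4 < L" using j L Lr unfolding q_def by linarith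
    have "0 < G (d (r + 4 * j))" using gp jj by simp
    moreover have "4 * G (d (r + 4 * j + 4)) \<le> G (d (r + 4 * j))" using h4 jj by simp
    ultimately show "0 < gm (T j) \<and> 4 * gm (T (Suc j)) \<le> gm (T j)"
      unfolding T_def G_gm[symmetric] by (simp add: algebra_simps)
  qed
  moreover have "L \<le> 4 * q" unfolding q_def using L by presburger
  ultimately show ?thesis by linarith
qed

theorem main_loc:
  shows "\<exists>l::nat. 1 \<le> l \<and> l \<le> 2 * (card V)^2 + 2 * (card V) + 4
     \<and> (\<forall>k<l. \<exists>d g. ln_run V h a orc k = Run d g)
     \<and> (\<forall>k. k + 1 < l \<longrightarrow> iterate_of (ln_run V h a orc (k + 1)) < iterate_of (ln_run V h a orc k))
     \<and> iterate_of (ln_run V h a orc (l - 1)) = delta_star V h a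
     \<and> ln_run V h a orc l = Done (delta_star V h a)"
proof -
  let ?R = "ln_run V h a orc"
  define nf where "nf j \<longleftrightarrow> (\<exists>x. ?R j = Run x (sgrad a orc x) \<and> Dm < x)" for j
  have run_Suc: "?R (Suc k) = ln_step V h a orc (?R k)" for k by (simp add: ln_run_def)
  have init: "\<exists>x. ?R 0 = Run x (sgrad a orc x) \<and> Dm \<le> x"
  proof -
    let ?I = "(\<lambda>i. h {i} / a i) ` {i \<in> V. a i > 0}"
    have "finite ?I" using fin by simp
    moreover have "?I \<noteq> {}" using pos by blast
    ultimately have "delta_init V h a \<in> ?I" unfolding delta_init_def using Min_in by blast
    then obtain i where i: "i \<in> V" "a i > 0" "delta_init V h a = h {i} / a i" by blast
    have "Dm \<le> h {i} / asum a {i}" using Dm_le[of "{i}"] i by (simp add: asum_def)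
    hence "Dm \<le> delta_init V h a" using i by (simp add: asum_def)
    thus ?thesis by (simp add: ln_run_def)
  qed
  have inv: "\<exists>x. ?R k = Run x (sgrad a orc x) \<and> Dm \<le> x" if "\<forall>j<k. nf j" for k
    using that
  proof (induction k)
    case 0 show ?case using init .
  next
    case (Suc k)
    then obtain x where x: "?R k = Run x (sgrad a orc x)" "Dm < x" unfolding nf_def by blast
    have "?R (Suc k) = Run (nxt x) (sgrad a orc (nxt x))" using run_Suc x step_run by simp
    thus ?case using nxt_props[OF x(2)] by blast
  qed
  define d where "d k = iterate_of (?R k)" for k
  have nfD: "?R j = Run (d j) (sgrad a orc (d j)) \<and> Dm < d j \<and> d (Suc j) = nxt (d j)
      \<and> ?R (Suc j) = Run (nxt (d j)) (sgrad a orc (nxt (d j)))" if nfj: "nf j" for j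
  proof -
    obtain x where x: "?R j = Run x (sgrad a orc x)" "Dm < x" using nfj unfolding nf_def by blast
    have "?R (Suc j) = Run (nxt x) (sgrad a orc (nxt x))" using run_Suc x step_run by simp
    thus ?thesis using x unfolding d_def by simp
  qed
  define N where "N = 2 * (card V)^2 + 2 * (card V) + 4"
  have ex: "\<exists>K. \<not> nf K"
  proof (rule ccontr)
    assume "\<not> (\<exists>K. \<not> nf K)"
    hence all: "\<And>K. nf K" by blast
    have "Suc N \<le> N" unfolding N_def
    proof (rule count)
      fix k
      show "Dm \<le> d k" using nfD[OF all[of k]] by simp
      show "Dm < d k \<and> d (Suc k) = nxt (d k)" using nfD[OF all[of k]] by simp
    qed simp
    thus False by simp
  qed
  define L0 where "L0 = (LEAST K. \<not> nf K)"
  have notnf: "\<not> nf L0" unfolding L0_def using LeastI_ex[OF ex] .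
  have allnf: "nf j" if "j < L0" for j using not_less_Least[OF that[unfolded L0_def]] by blast
  obtain x where x: "?R L0 = Run x (sgrad a orc x)" "Dm \<le> x" using inv allnf by blast
  have xD: "x = Dm" using x notnf unfolding nf_def by force
  have dL0: "d L0 = Dm" using x xD unfolding d_def by simp
  have bound: "Suc L0 \<le> N" unfolding N_def
  proof (rule count)
    show "1 \<le> Suc L0" by simp
    fix k
    show "Dm \<le> d k" if "k < Suc L0"
    proof (cases "k < L0")
      case True thus ?thesis using nfD[OF allnf[OF True]] by simp
    next
      case False hence "k = L0" using that by simp
      thus ?thesis using dL0 by simp
    qed
    show "Dm < d k \<and> d (Suc k) = nxt (d k)" if "Suc k < Suc L0"
      using nfD[OF allnf] that by simp
  qed
  show ?thesis
  proof (rule exI[of _ "Suc L0"], intro conjI allI impI)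
    show "1 \<le> Suc L0" by simp
    show "Suc L0 \<le> 2 * (card V)^2 + 2 * (card V) + 4" using bound N_def by simp
  next
    fix k assume "k < Suc L0"
    thus "\<exists>d g. ?R k = Run d g"
    proof (cases "k < L0")
      case True thus ?thesis using nfD[OF allnf[OF True]] by blast
    next
      case False hence "k = L0" using \<open>k < Suc L0\<close> by simp
      thus ?thesis using x by blast
    qed
  next
    fix k assume "k + 1 < Suc L0"
    hence "nf k" using allnf by simp
    hence "d (Suc k) < d k" using nfD[of k] nxt_props[of "d k"] by simp
    thus "iterate_of (?R (k + 1)) < iterate_of (?R k)" unfolding d_def by simp
  next
    show "iterate_of (?R (Suc L0 - 1)) = delta_star V h a" using dL0 dstar unfolding d_def by simp
    show "?R (Suc L0) = Done (delta_star V h a)" using run_Suc x xD step_done dstar by simp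
  qed
qed

end


theorem mainTheorem6:
  fixes V :: "'a set" and h :: "'a set \<Rightarrow> real" and a :: "'a \<Rightarrow> real"
    and orc :: "real \<Rightarrow> 'a set" and n :: nat
  assumes "finite V" and "card V = n"
    and "\<forall>S. S \<subseteq> V \<longrightarrow> h S \<ge> 0"
    and "submodular_on V h"
    and "\<exists>i\<in>V. a i > 0"
    and "sfm_oracle V h a orc"
  shows "\<exists>l::nat. 1 \<le> l \<and> l \<le> 2 * n^2 + 2 * n + 4
     \<and> (\<forall>k<l. \<exists>d g. ln_run V h a orc k = Run d g)
     \<and> (\<forall>k. k + 1 < l \<longrightarrow> iterate_of (ln_run V h a orc (k + 1)) < iterate_of (ln_run V h a orc k))
     \<and> iterate_of (ln_run V h a orc (l - 1)) = delta_star V h a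
     \<and> ln_run V h a orc l = Done (delta_star V h a)"
proof -
  interpret ND V h a orc
    using assms(1,3,4,5,6) by unfold_locales
  show ?thesis using main_loc assms(2) by simp
qed

end
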